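(* Let $\mathbb{K}$ be an algebraically closed field of characteristic $0$ and let $f\in\mathbb{K}[X,Y]$ be a polynomial of degree $d\ge1$. Then $$\dim_{\mathbb{K}}\ker\mathcal{R}_d(f)=\dim_{\mathbb{K}}\ker\mathcal{G}_d(f)-1,$$ and for every integer $\nu>d$, $$\dim_{\mathbb{K}}\ker\mathcal{R}_\nu(f)=\dim_{\mathbb{K}}\ker\mathcal{G}_{\nu-1}(f).$$
   Context: $\mathbb{K}[X,Y]_{\le n}$ denotes polynomials of total degree $\le n$. For a positive integer $\nu\ge d$: $\mathcal{G}_\nu(f):\mathbb{K}[X,Y]_{\le\nu-1}^2\to\mathbb{K}[X,Y]_{\le\nu+d-2}$, $(G,H)\mapsto f\partial_YG-G\partial_Yf-f\partial_XH+H\partial_Xf$. Let $E_\nu=\{(G,H)\in\mathbb{K}[X,Y]_{\le\nu-1}^2:\ \deg(XG+YH)\le\nu-1\}$ (dimension $\nu^2-1$), and $\mathcal{R}_\nu(f):E_\nu\to\mathbb{K}[X,Y]_{\le\nu+d-3}$ the map $(G,H)\mapsto f\partial_YG-G\partial_Yf-f\partial_XH+H\partial_Xf$ (its image has degree $\le\nu+d-3$). *)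

theory Defs
  imports "HOL-Computational_Algebra.Polynomial" "HOL-Library.Product_Plus"
begin

text \<open>Bivariate polynomials K[X,Y] are represented as 'a poly poly = (K[X])[Y]:
  the outer variable is Y, coefficients are polynomials in X.\<close>

definition polyX :: "'a::field poly poly" where "polyX = [:[:0, 1:]:]"
definition polyY :: "'a::field poly poly" where "polyY = [:0, 1:]"

definition tdeg_le :: "'a::zero poly poly \<Rightarrow> nat \<Rightarrow> bool" where
  "tdeg_le p n \<longleftrightarrow> (\<forall>i. coeff p i \<noteq> 0 \<longrightarrow> i + degree (coeff p i) \<le> n)"

definition total_degree :: "'a::zero poly poly \<Rightarrow> nat" where
  "total_degree p = (if p = 0 then 0 else Max {i + degree (coeff p i) | i. coeff p i \<noteq> 0})"

definition dX :: "'a::field poly poly \<Rightarrow> 'a poly poly" where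
  "dX p = map_poly pderiv p"

definition dY :: "'a::field poly poly \<Rightarrow> 'a poly poly" where
  "dY p = pderiv p"

definition opGR :: "'a::field poly poly \<Rightarrow> 'a poly poly \<Rightarrow> 'a poly poly \<Rightarrow> 'a poly poly" where
  "opGR f G H = f * dY G - G * dY f - f * dX H + H * dX f"

definition kerG :: "'a::field poly poly \<Rightarrow> nat \<Rightarrow> ('a poly poly \<times> 'a poly poly) set" where
  "kerG f \<nu> = {(G, H). tdeg_le G (\<nu> - 1) \<and> tdeg_le H (\<nu> - 1) \<and> opGR f G H = 0}"

definition kerR :: "'a::field poly poly \<Rightarrow> nat \<Rightarrow> ('a poly poly \<times> 'a poly poly) set" where
  "kerR f \<nu> = {(G, H). tdeg_le G (\<nu> - 1) \<and> tdeg_le H (\<nu> - 1)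
       \<and> tdeg_le (polyX * G + polyY * H) (\<nu> - 1) \<and> opGR f G H = 0}"

definition scale2 :: "'a::field \<Rightarrow> 'a poly poly \<times> 'a poly poly \<Rightarrow> 'a poly poly \<times> 'a poly poly" where
  "scale2 c x = (smult [:c:] (fst x), smult [:c:] (snd x))"

definition kdim :: "('a::field poly poly \<times> 'a poly poly) set \<Rightarrow> nat" where
  "kdim S = Vector_Spaces.vector_space.dim scale2 S"

end

theory Submission imports Defs begin

definition cc :: "'a::zero poly poly \<Rightarrow> nat \<Rightarrow> nat \<Rightarrow> 'a" where
  "cc p i j = coeff (coeff p j) i"

lemma cc_eqI: "(\<And>i j. cc p i j = cc q i j) \<Longrightarrow> p = q"
  unfolding cc_def by (rule poly_eqI, rule poly_eqI) simp

lemma cc_add[simp]: "cc (p + q) i j = cc p i j + cc q i j" by (simp add: cc_def)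
lemma cc_diff[simp]: "cc (p - q) i j = cc p i j - cc (q::'a::ab_group_add poly poly) i j" by (simp add: cc_def)
lemma cc_minus[simp]: "cc (- p) i j = - cc (p::'a::ab_group_add poly poly) i j" by (simp add: cc_def)
lemma cc_0[simp]: "cc 0 i j = 0" by (simp add: cc_def)
lemma cc_smult[simp]: "cc (smult [:c:] p) i j = c * cc (p::'a::comm_semiring_1 poly poly) i j"
  by (simp add: cc_def)
lemma cc_X[simp]: "cc (polyX * p) i j = (if i = 0 then 0 else cc (p::'a::field poly poly) (i - 1) j)"
  by (simp add: cc_def polyX_def coeff_pCons split: nat.split)
lemma cc_Y[simp]: "cc (polyY * p) i j = (if j = 0 then 0 else cc (p::'a::field poly poly) i (j - 1))"
  by (simp add: cc_def polyY_def coeff_pCons split: nat.split)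
lemma cc_dX[simp]: "cc (dX p) i j = of_nat (Suc i) * cc p (Suc i) j"
  by (simp add: cc_def dX_def coeff_map_poly coeff_pderiv)
lemma cc_dY[simp]: "cc (dY p) i j = of_nat (Suc j) * cc p i (Suc j)"
  by (simp add: cc_def dY_def coeff_pderiv of_nat_poly)
lemma cc_sum: "cc (sum g A) i j = (\<Sum>x\<in>A. cc (g x) i j)"
  by (simp add: cc_def coeff_sum)

lemma poly_mult_nz: "coeff (a * b) n \<noteq> 0 \<Longrightarrow> \<exists>k\<le>n. coeff a k \<noteq> 0 \<and> coeff b (n - k) \<noteq> 0"
proof (rule ccontr)
  assume a: "coeff (a * b) n \<noteq> 0" "\<not> (\<exists>k\<le>n. coeff a k \<noteq> 0 \<and> coeff b (n - k) \<noteq> 0)"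
  then have "\<And>k. k \<in> {..n} \<Longrightarrow> coeff a k * coeff b (n - k) = 0" by auto
  then have "coeff (a * b) n = 0" unfolding coeff_mult by (rule sum.neutral[rule_format])
  with a show False by simp
qed

lemma cc_mult_nz:
  assumes "cc (p * q) i j \<noteq> 0"
  shows "\<exists>i1 j1 i2 j2. i = i1 + i2 \<and> j = j1 + j2 \<and> cc p i1 j1 \<noteq> 0 \<and> cc q i2 j2 \<noteq> 0"
proof -
  have "coeff (coeff (p * q) j) i \<noteq> 0" using assms by (simp add: cc_def)
  then have "(\<Sum>k\<le>j. coeff (coeff p k * coeff q (j - k)) i) \<noteq> 0"
    by (simp add: coeff_mult coeff_sum)
  then have "\<exists>k\<le>j. coeff (coeff p k * coeff q (j - k)) i \<noteq> 0"
  proof (rule contrapos_np)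
    assume "\<not> (\<exists>k\<le>j. coeff (coeff p k * coeff q (j - k)) i \<noteq> 0)"
    then show "(\<Sum>k\<le>j. coeff (coeff p k * coeff q (j - k)) i) = 0" by (intro sum.neutral) auto
  qed
  then obtain k where k: "k \<le> j" "coeff (coeff p k * coeff q (j - k)) i \<noteq> 0" by blast
  then obtain l where l: "l \<le> i" "coeff (coeff p k) l \<noteq> 0" "coeff (coeff q (j-k)) (i - l) \<noteq> 0"
    using poly_mult_nz by blast
  have "i = l + (i - l)" "j = k + (j - k)" using k l by auto
  then show ?thesis using l unfolding cc_def by blast
qed

lemma tdeg_le_cc: "tdeg_le p n \<longleftrightarrow> (\<forall>i j. cc p i j \<noteq> 0 \<longrightarrow> i + j \<le> n)"
  unfolding tdeg_le_def cc_def
proof safe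
  fix i j assume a: "\<forall>i. coeff p i \<noteq> 0 \<longrightarrow> i + degree (coeff p i) \<le> n" "coeff (coeff p j) i \<noteq> 0"
  then have "coeff p j \<noteq> 0" by auto
  with a have "j + degree (coeff p j) \<le> n" by blast
  moreover have "i \<le> degree (coeff p j)" using a(2) by (rule le_degree)
  ultimately show "i + j \<le> n" by simp
next
  fix i assume a: "\<forall>ia j. coeff (coeff p j) ia \<noteq> 0 \<longrightarrow> ia + j \<le> n" "coeff p i \<noteq> 0"
  then have "coeff (coeff p i) (degree (coeff p i)) \<noteq> 0" by simp
  then show "i + degree (coeff p i) \<le> n" using a by fastforce
qed

definition hom :: "nat \<Rightarrow> 'a::zero poly poly \<Rightarrow> bool" where
  "hom n p \<longleftrightarrow> (\<forall>i j. cc p i j \<noteq> 0 \<longrightarrow> i + j = n)"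
definition lt :: "nat \<Rightarrow> 'a::zero poly poly \<Rightarrow> bool" where
  "lt n p \<longleftrightarrow> (\<forall>i j. cc p i j \<noteq> 0 \<longrightarrow> i + j < n)"

lemma hom_iff: "hom n p \<longleftrightarrow> (\<forall>i j. i + j \<noteq> n \<longrightarrow> cc p i j = 0)"
  unfolding hom_def by blast
lemma lt_iff: "lt n p \<longleftrightarrow> (\<forall>i j. n \<le> i + j \<longrightarrow> cc p i j = 0)"
  unfolding lt_def by (auto simp: not_le[symmetric])
lemma tdeg_iff: "tdeg_le p n \<longleftrightarrow> (\<forall>i j. n < i + j \<longrightarrow> cc p i j = 0)"
  unfolding tdeg_le_cc by (auto simp: not_le[symmetric])

lemma hom_0[simp]: "hom n 0" by (simp add: hom_def)
lemma hom_add: "hom n p \<Longrightarrow> hom n q \<Longrightarrow> hom n (p + q)"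
  unfolding hom_iff by simp
lemma hom_diff: "hom n p \<Longrightarrow> hom n q \<Longrightarrow> hom n (p - (q::'a::ab_group_add poly poly))"
  unfolding hom_iff by simp
lemma hom_smult: "hom n p \<Longrightarrow> hom n (smult [:c:] (p::'a::comm_semiring_1 poly poly))"
  unfolding hom_iff by simp
lemma hom_X: assumes "hom n p" shows "hom (Suc n) (polyX * (p::'a::field poly poly))"
  unfolding hom_iff
proof (intro allI impI)
  fix i j assume "i + j \<noteq> Suc n"
  then have "i = 0 \<or> (i - 1) + j \<noteq> n" by auto
  then show "cc (polyX * p) i j = 0" using assms unfolding hom_iff by auto
qed
lemma hom_Y: assumes "hom n p" shows "hom (Suc n) (polyY * (p::'a::field poly poly))"
  unfolding hom_iff
proof (intro allI impI)
  fix i j assume "i + j \<noteq> Suc n"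
  then have "j = 0 \<or> i + (j - 1) \<noteq> n" by auto
  then show "cc (polyY * p) i j = 0" using assms unfolding hom_iff by auto
qed
lemma hom_dX: assumes "hom n p" shows "hom (n - 1) (dX p)"
  unfolding hom_iff
proof (intro allI impI)
  fix i j assume "i + j \<noteq> n - 1"
  then have "Suc i + j \<noteq> n" by auto
  then show "cc (dX p) i j = 0" using assms unfolding hom_iff by auto
qed
lemma hom_dY: assumes "hom n p" shows "hom (n - 1) (dY p)"
  unfolding hom_iff
proof (intro allI impI)
  fix i j assume "i + j \<noteq> n - 1"
  then have "i + Suc j \<noteq> n" by auto
  then show "cc (dY p) i j = 0" using assms unfolding hom_iff by auto
qed
lemma hom_mult: assumes "hom n p" "hom m q" shows "hom (n + m) (p * q)"
  unfolding hom_def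
proof (intro allI impI)
  fix i j assume "cc (p * q) i j \<noteq> 0"
  then obtain i1 j1 i2 j2 where e: "i = i1 + i2" "j = j1 + j2" "cc p i1 j1 \<noteq> 0" "cc q i2 j2 \<noteq> 0"
    using cc_mult_nz by blast
  have "i1 + j1 = n" using assms(1) e(3) unfolding hom_def by blast
  moreover have "i2 + j2 = m" using assms(2) e(4) unfolding hom_def by blast
  ultimately show "i + j = n + m" using e by simp
qed

lemma tdeg_0[simp]: "tdeg_le 0 n" by (simp add: tdeg_le_cc)
lemma tdeg_add: "tdeg_le p n \<Longrightarrow> tdeg_le q n \<Longrightarrow> tdeg_le (p + q) n"
  unfolding tdeg_iff by simp
lemma tdeg_diff: "tdeg_le p n \<Longrightarrow> tdeg_le q n \<Longrightarrow> tdeg_le (p - (q::'a::ab_group_add poly poly)) n"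
  unfolding tdeg_iff by simp
lemma tdeg_smult: "tdeg_le p n \<Longrightarrow> tdeg_le (smult [:c:] (p::'a::comm_semiring_1 poly poly)) n"
  unfolding tdeg_iff by simp
lemma tdeg_X: assumes "tdeg_le p n" shows "tdeg_le (polyX * (p::'a::field poly poly)) (Suc n)"
  unfolding tdeg_iff
proof (intro allI impI)
  fix i j assume "Suc n < i + j"
  then have "i = 0 \<or> n < (i - 1) + j" by auto
  then show "cc (polyX * p) i j = 0" using assms unfolding tdeg_iff by auto
qed
lemma tdeg_Y: assumes "tdeg_le p n" shows "tdeg_le (polyY * (p::'a::field poly poly)) (Suc n)"
  unfolding tdeg_iff
proof (intro allI impI)
  fix i j assume "Suc n < i + j"
  then have "j = 0 \<or> n < i + (j - 1)" by auto
  then show "cc (polyY * p) i j = 0" using assms unfolding tdeg_iff by auto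
qed
lemma tdeg_dX: assumes "tdeg_le p n" shows "tdeg_le (dX p) (n - 1)"
  unfolding tdeg_iff
proof (intro allI impI)
  fix i j assume "n - 1 < i + j"
  then have "n < Suc i + j" by auto
  then show "cc (dX p) i j = 0" using assms unfolding tdeg_iff by auto
qed
lemma tdeg_dY: assumes "tdeg_le p n" shows "tdeg_le (dY p) (n - 1)"
  unfolding tdeg_iff
proof (intro allI impI)
  fix i j assume "n - 1 < i + j"
  then have "n < i + Suc j" by auto
  then show "cc (dY p) i j = 0" using assms unfolding tdeg_iff by auto
qed
lemma tdeg_mult: assumes "tdeg_le p n" "tdeg_le q m" shows "tdeg_le (p * q) (n + m)"
  unfolding tdeg_le_cc
proof (intro allI impI)
  fix i j assume "cc (p * q) i j \<noteq> 0"
  then obtain i1 j1 i2 j2 where e: "i = i1 + i2" "j = j1 + j2" "cc p i1 j1 \<noteq> 0" "cc q i2 j2 \<noteq> 0"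
    using cc_mult_nz by blast
  have "i1 + j1 \<le> n" using assms(1) e(3) unfolding tdeg_le_cc by blast
  moreover have "i2 + j2 \<le> m" using assms(2) e(4) unfolding tdeg_le_cc by blast
  ultimately show "i + j \<le> n + m" using e by simp
qed
lemma tdeg_mono: "tdeg_le p n \<Longrightarrow> n \<le> m \<Longrightarrow> tdeg_le p m"
  unfolding tdeg_le_cc by (meson order_trans)
lemma hom_tdeg: "hom n p \<Longrightarrow> tdeg_le p n"
  unfolding tdeg_le_cc hom_def by simp

lemma lt_add: "lt n p \<Longrightarrow> lt n q \<Longrightarrow> lt n (p + q)"
  unfolding lt_iff by simp
lemma lt_mult: assumes "lt n p" "tdeg_le q m" shows "lt (n + m) (p * q)"
  unfolding lt_def
proof (intro allI impI)
  fix i j assume "cc (p * q) i j \<noteq> 0"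
  then obtain i1 j1 i2 j2 where e: "i = i1 + i2" "j = j1 + j2" "cc p i1 j1 \<noteq> 0" "cc q i2 j2 \<noteq> 0"
    using cc_mult_nz by blast
  have "i1 + j1 < n" using assms(1) e(3) unfolding lt_def by blast
  moreover have "i2 + j2 \<le> m" using assms(2) e(4) unfolding tdeg_le_cc by blast
  ultimately show "i + j < n + m" using e by simp
qed
lemma lt_mult2: assumes "tdeg_le p n" "lt m q" shows "lt (n + m) (p * q)"
  unfolding lt_def
proof (intro allI impI)
  fix i j assume "cc (p * q) i j \<noteq> 0"
  then obtain i1 j1 i2 j2 where e: "i = i1 + i2" "j = j1 + j2" "cc p i1 j1 \<noteq> 0" "cc q i2 j2 \<noteq> 0"
    using cc_mult_nz by blast
  have "i1 + j1 \<le> n" using assms(1) e(3) unfolding tdeg_le_cc by blast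
  moreover have "i2 + j2 < m" using assms(2) e(4) unfolding lt_def by blast
  ultimately show "i + j < n + m" using e by simp
qed
lemma lt_tdeg: "lt n p \<Longrightarrow> tdeg_le p (n - 1)"
  unfolding lt_def tdeg_le_cc by fastforce

definition hp :: "nat \<Rightarrow> 'a::comm_ring_1 poly poly \<Rightarrow> 'a poly poly" where
  "hp n p = (\<Sum>j\<le>n. monom (monom (cc p (n - j) j) (n - j)) j)"

lemma cc_hp[simp]: "cc (hp n p) i j = (if i + j = n then cc p i j else 0)"
proof -
  have "coeff (hp n p) j = (if j \<le> n then monom (cc p (n - j) j) (n - j) else 0)"
    unfolding hp_def coeff_sum by (simp add: coeff_monom)
  then show ?thesis unfolding cc_def by (auto simp: coeff_monom cc_def)
qed

lemma hom_hp: "hom n (hp n p)" by (simp add: hom_def)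
lemma tdeg_hp: "tdeg_le (hp n p) n" by (simp add: hom_tdeg hom_hp)
lemma hp_hom: "hom n p \<Longrightarrow> hp n p = p"
  by (rule cc_eqI) (auto simp: hom_def)
lemma hp_lt: "lt n p \<Longrightarrow> hp n p = 0"
  by (rule cc_eqI) (auto simp: lt_def)
lemma hp_tdeg: "tdeg_le p n \<Longrightarrow> n < m \<Longrightarrow> hp m p = 0"
  unfolding tdeg_iff by (intro cc_eqI) simp
lemma hp_add: "hp n (p + q) = hp n p + hp n q" by (rule cc_eqI) simp
lemma hp_diff: "hp n (p - q) = hp n p - hp n (q::'a::comm_ring_1 poly poly)" by (rule cc_eqI) simp
lemma hp_smult: "hp n (smult [:c:] p) = smult [:c:] (hp n (p::'a::comm_ring_1 poly poly))"
  by (rule cc_eqI) simp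
lemma hp_X: "hp (Suc n) (polyX * p) = polyX * hp n (p::'a::field poly poly)"
  by (rule cc_eqI) auto
lemma hp_Y: "hp (Suc n) (polyY * p) = polyY * hp n (p::'a::field poly poly)"
  by (rule cc_eqI) auto
lemma hp_dX: assumes "tdeg_le p n" shows "hp (n - 1) (dX p) = dX (hp n p)"
  apply (rule cc_eqI) subgoal for i j
  using assms[unfolded tdeg_le_cc, rule_format, of "Suc i" "j"]
  by (cases n) (auto simp del: of_nat_Suc) done
lemma hp_dY: assumes "tdeg_le p n" shows "hp (n - 1) (dY p) = dY (hp n p)"
  apply (rule cc_eqI) subgoal for i j
  using assms[unfolded tdeg_le_cc, rule_format, of "i" "Suc j"]
  by (cases n) (auto simp del: of_nat_Suc) done
lemma lt_sub_hp: "tdeg_le p n \<Longrightarrow> lt n (p - hp n (p::'a::comm_ring_1 poly poly))"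
  unfolding lt_def tdeg_le_cc by (auto simp: le_less)
lemma hom_lt_tdeg: "tdeg_le p n \<Longrightarrow> hp n p = 0 \<Longrightarrow> lt n (p::'a::comm_ring_1 poly poly)"
  using lt_sub_hp by fastforce

lemma hp_mult:
  fixes p q :: "'a::comm_ring_1 poly poly"
  assumes "tdeg_le p n" "tdeg_le q m"
  shows "hp (n + m) (p * q) = hp n p * hp m q"
proof -
  define a b r s where "a = hp n p" "b = hp m q" "r = p - a" "s = q - b"
  have ha: "hom n a" "hom m b" by (simp_all add: a_b_r_s_def hom_hp)
  have lr: "lt n r" "lt m s" using assms by (simp_all add: a_b_r_s_def lt_sub_hp)
  have pq: "p * q = a * b + (a * s + r * b + r * s)"
    by (simp add: a_b_r_s_def algebra_simps)
  have ts: "tdeg_le s m" using assms(2) by (simp add: a_b_r_s_def tdeg_diff tdeg_hp)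
  have "lt (n + m) (a * s)" using lt_mult2[OF hom_tdeg[OF ha(1)] lr(2)] .
  moreover have "lt (n + m) (r * b)" using lt_mult[OF lr(1) hom_tdeg[OF ha(2)]] .
  moreover have "lt (n + m) (r * s)" using lt_mult[OF lr(1) ts] .
  ultimately have L: "lt (n + m) (a * s + r * b + r * s)" by (intro lt_add)
  have "hp (n + m) (p * q) = hp (n + m) (a * b) + hp (n + m) (a * s + r * b + r * s)"
    by (simp only: pq hp_add)
  also have "\<dots> = a * b" using hp_lt[OF L] hp_hom[OF hom_mult[OF ha]] by simp
  finally show ?thesis by (simp add: a_b_r_s_def)
qed


lemma tdeg0_dY: "tdeg_le q 0 \<Longrightarrow> dY q = 0"
  by (rule cc_eqI) (auto simp: tdeg_le_cc simp del: of_nat_Suc)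
lemma tdeg0_dX: "tdeg_le q 0 \<Longrightarrow> dX q = 0"
  by (rule cc_eqI) (auto simp: tdeg_le_cc simp del: of_nat_Suc)

lemma hp_mult_dY:
  fixes p q :: "'a::field poly poly"
  assumes "tdeg_le p a" "tdeg_le q b"
  shows "hp (a + b - 1) (p * dY q) = hp a p * dY (hp b q)"
proof (cases b)
  case 0
  then show ?thesis using assms tdeg_hp[of b q] by (simp add: tdeg0_dY hp_lt lt_def)
next
  case (Suc b')
  then have "hp (a + b - 1) (p * dY q) = hp a p * hp b' (dY q)"
    using hp_mult[OF assms(1) tdeg_dY[OF assms(2)]] by simp
  then show ?thesis using hp_dY[OF assms(2)] Suc by simp
qed

lemma hp_mult_dX:
  fixes p q :: "'a::field poly poly"
  assumes "tdeg_le p a" "tdeg_le q b"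
  shows "hp (a + b - 1) (p * dX q) = hp a p * dX (hp b q)"
proof (cases b)
  case 0
  then show ?thesis using assms tdeg_hp[of b q] by (simp add: tdeg0_dX hp_lt lt_def)
next
  case (Suc b')
  then have "hp (a + b - 1) (p * dX q) = hp a p * hp b' (dX q)"
    using hp_mult[OF assms(1) tdeg_dX[OF assms(2)]] by simp
  then show ?thesis using hp_dX[OF assms(2)] Suc by simp
qed

lemma hp_opGR:
  fixes f G H :: "'a::field poly poly"
  assumes "tdeg_le f d" "tdeg_le G n" "tdeg_le H n"
  shows "hp (d + n - 1) (opGR f G H) = opGR (hp d f) (hp n G) (hp n H)"
proof -
  have e: "n + d - 1 = d + n - 1" by simp
  show ?thesis unfolding opGR_def hp_add hp_diff
    using hp_mult_dY[OF assms(1,2)] hp_mult_dY[OF assms(2,1)]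
      hp_mult_dX[OF assms(1,3)] hp_mult_dX[OF assms(3,1)] e by simp
qed

lemma cc_of_nat_mult[simp]: "cc (of_nat k * p) i j = of_nat k * cc (p::'a::comm_ring_1 poly poly) i j"
  by (simp add: cc_def of_nat_poly)

lemma euler: "hom n p \<Longrightarrow> polyX * dX p + polyY * dY p = of_nat n * (p::'a::field poly poly)"
proof (rule cc_eqI)
  fix i j assume h: "hom n p"
  show "cc (polyX * dX p + polyY * dY p) i j = cc (of_nat n * p) i j"
  proof (cases "cc p i j = 0")
    case True then show ?thesis by (auto simp del: of_nat_Suc)
  next
    case False
    then have "i + j = n" using h by (auto simp: hom_def)
    then have "n = i + j" by simp
    then show ?thesis unfolding cc_of_nat_mult cc_add cc_X cc_Y cc_dX cc_dY
      by (cases i; cases j) (simp_all add: ring_distribs)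
  qed
qed

lemma dY_Y: "dY (polyY * S) = S + polyY * dY (S::'a::field poly poly)"
  apply (rule cc_eqI) subgoal for i j by (cases j) (simp_all add: ring_distribs) done
lemma dX_X: "dX (polyX * S) = S + polyX * dX (S::'a::field poly poly)"
  apply (rule cc_eqI) subgoal for i j by (cases i) (simp_all add: ring_distribs) done
lemma dY_X: "dY (polyX * S) = polyX * dY (S::'a::field poly poly)"
  by (rule cc_eqI) (auto simp del: of_nat_Suc)
lemma dX_Y: "dX (polyY * S) = polyY * dX (S::'a::field poly poly)"
  by (rule cc_eqI) (auto simp del: of_nat_Suc)
lemma dX_add: "dX (p + q) = dX p + dX (q::'a::field poly poly)"
  by (rule cc_eqI) (auto simp del: of_nat_Suc simp: algebra_simps)
lemma dY_add: "dY (p + q) = dY p + dY (q::'a::field poly poly)"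
  by (rule cc_eqI) (auto simp del: of_nat_Suc simp: algebra_simps)
lemma dX_diff: "dX (p - q) = dX p - dX (q::'a::field poly poly)"
  by (rule cc_eqI) (auto simp del: of_nat_Suc simp: algebra_simps)
lemma dY_diff: "dY (p - q) = dY p - dY (q::'a::field poly poly)"
  by (rule cc_eqI) (auto simp del: of_nat_Suc simp: algebra_simps)
lemma dX_minus: "dX (- p) = - dX (p::'a::field poly poly)"
  by (rule cc_eqI) (auto simp del: of_nat_Suc simp: algebra_simps)
lemma dY_minus: "dY (- p) = - dY (p::'a::field poly poly)"
  by (rule cc_eqI) (auto simp del: of_nat_Suc simp: algebra_simps)
lemma dX_smult: "dX (smult [:c:] p) = smult [:c:] (dX (p::'a::field poly poly))"
  by (rule cc_eqI) (auto simp del: of_nat_Suc simp: algebra_simps)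
lemma dY_smult: "dY (smult [:c:] p) = smult [:c:] (dY (p::'a::field poly poly))"
  by (rule cc_eqI) (auto simp del: of_nat_Suc simp: algebra_simps)
lemma dXdY: "dX (dY p) = dY (dX (p::'a::field poly poly))"
  by (rule cc_eqI) (auto simp del: of_nat_Suc simp: algebra_simps)


lemma polyY_mult: "polyY * S = pCons 0 S" by (simp add: polyY_def)

lemma partA:
  fixes f G H :: "'a::field_char_0 poly poly"
  assumes tf: "tdeg_le f d" and F0: "hp d f \<noteq> 0" and nd: "d \<le> n" and d1: "1 \<le> d"
    and tG: "tdeg_le G n" and tH: "tdeg_le H n" and tE: "tdeg_le (polyX * G + polyY * H) n"
    and op: "opGR f G H = 0"
  shows "tdeg_le G (n - 1) \<and> tdeg_le H (n - 1)"
proof -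
  define F g h where "F = hp d f" "g = hp n G" "h = hp n H"
  have hF: "hom d F" and hg: "hom n g" and hh: "hom n h" by (simp_all add: F_g_h_def hom_hp)
  have e0: "polyX * g + polyY * h = 0"
    using hp_tdeg[OF tE, of "Suc n"] by (simp add: hp_add hp_X hp_Y F_g_h_def)
  have c0: "opGR F g h = 0"
    using hp_opGR[OF tf tG tH] op by (simp add: F_g_h_def hp_lt lt_def)
  have "coeff g 0 = 0"
  proof (rule poly_eqI)
    fix i
    have "cc g i 0 = cc (polyX * g + polyY * h) (Suc i) 0" by simp
    then have "cc g i 0 = 0" using e0 by simp
    then show "coeff (coeff g 0) i = coeff 0 i" by (simp add: cc_def)
  qed
  then obtain S where gS: "g = polyY * S"
    by (metis pCons_cases coeff_pCons_0 polyY_mult)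
  have "polyY * (polyX * S + h) = 0" using e0 gS by (simp add: algebra_simps)
  then have hS: "h = - (polyX * S)" by (simp add: polyY_def add_eq_0_iff2 neg_equal_iff_equal)
  have hS': "hom (n - 1) S"
    unfolding hom_iff
  proof (intro allI impI)
    fix i j assume "i + j \<noteq> n - 1"
    then have "i + Suc j \<noteq> n \<or> n = 0" by auto
    moreover have "cc g i (Suc j) = cc S i j" using gS by simp
    ultimately show "cc S i j = 0" using hg nd unfolding hom_iff
      by (metis add_is_0 zero_neq_one add_Suc_right nat.distinct(1))
  qed
  have eS: "polyX * dX S + polyY * dY S = of_nat (n - 1) * S" using euler[OF hS'] .
  have eF: "polyX * dX F + polyY * dY F = of_nat d * F" using euler[OF hF] .
  have "opGR F g h = 2 * F * S + F * (polyX * dX S + polyY * dY S) - S * (polyX * dX F + polyY * dY F)"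
    unfolding opGR_def gS hS dY_Y dX_minus dY_minus dX_X dX_Y dY_X
    by (simp add: algebra_simps mult_2)
  also have "\<dots> = (2 + of_nat (n - 1) - of_nat d) * (F * S)"
    unfolding eS eF by (simp add: algebra_simps)
  also have "(2 + of_nat (n - 1) - of_nat d :: 'a poly poly) = of_nat (n + 1 - d)"
  proof -
    have "n + 1 - d = 2 + (n - 1) - d \<or> n = 0" using nd by auto
    then show ?thesis using nd d1 by (auto simp: of_nat_diff)
  qed
  finally have "of_nat (n + 1 - d) * (F * S) = (0 :: 'a poly poly)" using c0 by simp
  moreover have "(of_nat (n + 1 - d) :: 'a poly poly) \<noteq> 0" using nd by (simp del: of_nat_diff)
  ultimately have "S = 0" using F0 by (simp add: F_g_h_def)
  then have "g = 0" "h = 0" using gS hS by simp_all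
  then have "lt n G" "lt n H" using hom_lt_tdeg tG tH by (simp_all add: F_g_h_def)
  then show ?thesis using lt_tdeg by blast
qed


lemma top_coeff:
  fixes F D :: "'a::{idom,ring_char_0} poly"
  shows "coeff (F * pderiv D) (degree F + degree D - 1) = lead_coeff F * (of_nat (degree D) * lead_coeff D)"
proof (cases "degree D")
  case 0
  then have "pderiv D = 0" by (simp add: pderiv_eq_0_iff)
  then show ?thesis using 0 by simp
next
  case (Suc b)
  then have dp: "degree (pderiv D) = b" by (simp add: degree_pderiv)
  have "coeff (F * pderiv D) (degree F + degree D - 1) = coeff (F * pderiv D) (degree F + degree (pderiv D))"
    using Suc dp by simp
  also have "\<dots> = lead_coeff F * coeff (pderiv D) b" using coeff_mult_degree_sum[of F "pderiv D"] dp by simp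
  also have "\<dots> = lead_coeff F * (of_nat (degree D) * lead_coeff D)" using Suc by (simp add: coeff_pderiv)
  finally show ?thesis .
qed

lemma deg_eq:
  fixes F D :: "'a::{idom,ring_char_0} poly"
  assumes "F \<noteq> 0" "D \<noteq> 0" "F * pderiv D = D * pderiv F"
  shows "degree D = degree F"
proof -
  have "coeff (F * pderiv D) (degree F + degree D - 1) = coeff (D * pderiv F) (degree D + degree F - 1)"
    using assms(3) by (simp add: add.commute)
  then have "lead_coeff F * (of_nat (degree D) * lead_coeff D) = lead_coeff D * (of_nat (degree F) * lead_coeff F)"
    by (simp only: top_coeff)
  then have "(lead_coeff F * lead_coeff D) * (of_nat (degree D) - of_nat (degree F)) = 0"
    by (simp add: algebra_simps)
  then have "(of_nat (degree D) :: 'a) = of_nat (degree F)" using assms(1,2) by simp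
  then show ?thesis by simp
qed

lemma coeff_hom: "hom d P \<Longrightarrow> coeff P j = monom (cc P (d - j) j) (d - j)"
  by (rule poly_eqI) (auto simp: coeff_monom hom_iff cc_def[symmetric])

lemma ratio:
  fixes F E :: "'a::field_char_0 poly poly"
  assumes hF: "hom d F" and F0: "F \<noteq> 0" and hE: "hom d E" and eq: "F * pderiv E = E * pderiv F"
  shows "\<exists>c. E = smult [:c:] F"
proof -
  define a where "a = degree F"
  define fa where "fa = cc F (d - a) a"
  have "coeff F a \<noteq> 0" using F0 by (simp add: a_def)
  then have fa0: "fa \<noteq> 0" using coeff_hom[OF hF, of a] by (auto simp: fa_def)
  define c where "c = cc E (d - a) a / fa"
  define D where "D = E - smult [:c:] F"
  have hD: "hom d D" unfolding D_def by (intro hom_diff hE hom_smult hF)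
  have eqD: "F * pderiv D = D * pderiv F"
    unfolding D_def pderiv_diff pderiv_smult using eq by (simp add: algebra_simps)
  have cD: "coeff D a = 0"
    using coeff_hom[OF hD, of a] fa0 by (simp add: D_def c_def fa_def)
  have "degree E \<le> a"
  proof (cases "E = 0")
    case False then show ?thesis using deg_eq[OF F0 False eq] by (simp add: a_def)
  qed simp
  then have dD: "degree D \<le> a" unfolding D_def
    by (intro degree_diff_le) (use degree_smult_le[of "[:c:]" F] in \<open>simp_all add: a_def\<close>)
  have "D = 0"
  proof (rule ccontr)
    assume "D \<noteq> 0"
    then have "degree D = a" using deg_eq[OF F0 _ eqD] by (simp add: a_def)
    then show False using cD \<open>D \<noteq> 0\<close> by (metis leading_coeff_0_iff)
  qed
  then show ?thesis unfolding D_def by auto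
qed

lemma partB:
  fixes f G H :: "'a::field_char_0 poly poly"
  assumes tf: "tdeg_le f d" and F0: "hp d f \<noteq> 0" and d1: "1 \<le> d"
    and tG: "tdeg_le G (d - 1)" and tH: "tdeg_le H (d - 1)" and op: "opGR f G H = 0"
  shows "\<exists>c. hp d (polyX * G + polyY * H) = smult [:c:] (hp d f)"
proof -
  define F g h where "F = hp d f" "g = hp (d - 1) G" "h = hp (d - 1) H"
  have hF: "hom d F" and hg: "hom (d - 1) g" and hh: "hom (d - 1) h" by (simp_all add: F_g_h_def hom_hp)
  have sd: "Suc (d - 1) = d" using d1 by simp
  have E: "hp d (polyX * G + polyY * H) = polyX * g + polyY * h"
    using hp_X[of "d - 1" G, unfolded sd] hp_Y[of "d - 1" H, unfolded sd] by (simp add: hp_add F_g_h_def)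
  have c0: "opGR F g h = 0"
    using hp_opGR[OF tf tG tH] op by (simp add: F_g_h_def hp_lt lt_def)
  define E where "E = polyX * g + polyY * h"
  have hE: "hom d E" unfolding E_def using hom_X[OF hg] hom_Y[OF hh] sd by (metis hom_add)
  have eh: "polyX * dX h + polyY * dY h = of_nat (d - 1) * h" using euler[OF hh] .
  have eF: "polyX * dX F + polyY * dY F = of_nat d * F" using euler[OF hF] .
  have "F * dY E - E * dY F = polyX * opGR F g h + F * h + F * (polyX * dX h + polyY * dY h)
        - h * (polyX * dX F + polyY * dY F)"
    unfolding E_def opGR_def dY_add dY_X dY_Y by (simp add: algebra_simps)
  also have "\<dots> = (1 + of_nat (d - 1) - of_nat d) * (F * h)"
    unfolding c0 eh eF by (simp add: algebra_simps)
  also have "(1 + of_nat (d - 1) - of_nat d :: 'a poly poly) = 0" using d1 by (simp add: of_nat_diff)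
  finally have "F * pderiv E = E * pderiv F" by (simp add: dY_def)
  moreover have "F \<noteq> 0" using F0 by (simp add: F_g_h_def)
  ultimately obtain c where "E = smult [:c:] F" using ratio[OF hF _ hE] by blast
  then show ?thesis using E by (auto simp: E_def F_g_h_def)
qed


lemma smult_const_add: "smult [:a + b:] x = smult [:a:] x + smult [:b:] (x::'a::field poly poly)"
  by (rule cc_eqI) (simp add: algebra_simps)
lemma smult_const_mult: "smult [:a:] (smult [:b:] x) = smult [:a * b:] (x::'a::field poly poly)"
  by (rule cc_eqI) (simp add: algebra_simps)

interpretation v2: vector_space "scale2 :: 'a::field \<Rightarrow> 'a poly poly \<times> 'a poly poly \<Rightarrow> _"
  apply unfold_locales
  apply (auto simp: scale2_def smult_add_right smult_const_add smult_const_mult one_pCons[symmetric])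
  apply (simp_all add: mult.commute)
  done

lemma opGR_lin: "opGR f (G - smult [:c:] A) (H - smult [:c:] B) = opGR f G H - smult [:c:] (opGR f A (B::'a::field poly poly))"
  by (simp add: opGR_def dX_diff dY_diff dX_smult dY_smult algebra_simps smult_diff_right smult_add_right)
lemma opGR_add: "opGR f (G1 + G2) (H1 + H2) = opGR f G1 H1 + opGR f G2 (H2::'a::field poly poly)"
  by (simp add: opGR_def dX_add dY_add algebra_simps)
lemma opGR_smult: "opGR f (smult [:c:] G) (smult [:c:] H) = smult [:c:] (opGR f G (H::'a::field poly poly))"
  by (simp add: opGR_def dX_smult dY_smult algebra_simps smult_diff_right smult_add_right)

lemma subspace_kerG: "v2.subspace (kerG (f::'a::field poly poly) n)"
  unfolding v2.subspace_def kerG_def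
  by (auto simp: zero_prod_def scale2_def opGR_add opGR_smult intro: tdeg_add tdeg_smult)
     (simp add: opGR_def dX_def dY_def)

lemma tdeg_XY_add:
  assumes "tdeg_le (polyX * a + polyY * b) n" "tdeg_le (polyX * c + polyY * e) n"
  shows "tdeg_le (polyX * (a + c) + polyY * (b + (e::'a::field poly poly))) n"
proof -
  have "polyX * (a + c) + polyY * (b + e) = (polyX * a + polyY * b) + (polyX * c + polyY * e)"
    by (simp add: algebra_simps)
  then show ?thesis using tdeg_add[OF assms] by simp
qed
lemma tdeg_XY_smult:
  assumes "tdeg_le (polyX * a + polyY * b) n"
  shows "tdeg_le (polyX * smult [:k:] a + polyY * smult [:k:] (b::'a::field poly poly)) n"
proof -
  have "polyX * smult [:k:] a + polyY * smult [:k:] b = smult [:k:] (polyX * a + polyY * b)"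
    by (simp add: smult_add_right)
  then show ?thesis using tdeg_smult[OF assms] by simp
qed

lemma subspace_kerR: "v2.subspace (kerR (f::'a::field poly poly) n)"
  unfolding v2.subspace_def kerR_def
  by (auto simp: zero_prod_def scale2_def opGR_add opGR_smult simp del: mult_smult_right
       intro: tdeg_add tdeg_smult tdeg_XY_add tdeg_XY_smult) (simp add: opGR_def dX_def dY_def)

definition mm :: "nat \<Rightarrow> nat \<Rightarrow> 'a::field poly poly" where "mm i j = monom (monom 1 i) j"
lemma cc_mm[simp]: "cc (mm a b) i j = (if i = a \<and> j = b then 1 else 0)"
  by (simp add: mm_def cc_def coeff_monom)

lemma expand:
  fixes p :: "'a::field poly poly"
  assumes "tdeg_le p N"
  shows "p = (\<Sum>x\<in>{..N}\<times>{..N}. smult [:cc p (fst x) (snd x):] (mm (fst x) (snd x)))"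
proof (rule cc_eqI)
  fix i j
  have "cc (\<Sum>x\<in>{..N}\<times>{..N}. smult [:cc p (fst x) (snd x):] (mm (fst x) (snd x))) i j
      = (\<Sum>x\<in>{..N}\<times>{..N}. if x = (i, j) then cc p i j else 0)"
    unfolding cc_sum by (rule sum.cong) auto
  also have "\<dots> = cc p i j"
  proof (cases "(i, j) \<in> {..N}\<times>{..N}")
    case True then show ?thesis by (simp add: sum.delta)
  next
    case False
    then have "N < i + j" by auto
    then have "cc p i j = 0" using assms unfolding tdeg_iff by blast
    then show ?thesis by simp
  qed
  finally show "cc p i j = cc (\<Sum>x\<in>{..N}\<times>{..N}. smult [:cc p (fst x) (snd x):] (mm (fst x) (snd x))) i j"
    by simp
qed

definition WW :: "nat \<Rightarrow> ('a::field poly poly \<times> 'a poly poly) set" where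
  "WW N = (\<lambda>x. (mm (fst x) (snd x), 0)) ` ({..N}\<times>{..N}) \<union> (\<lambda>x. (0, mm (fst x) (snd x))) ` ({..N}\<times>{..N})"

lemma finite_WW: "finite (WW N)" by (simp add: WW_def)

lemma span_WW:
  fixes G H :: "'a::field poly poly"
  assumes "tdeg_le G N" "tdeg_le H N"
  shows "(G, H) \<in> v2.span (WW N)"
proof -
  have "(G, 0) = (\<Sum>x\<in>{..N}\<times>{..N}. scale2 (cc G (fst x) (snd x)) (mm (fst x) (snd x), 0))"
    using expand[OF assms(1)] by (simp add: scale2_def sum_prod)
  also have "\<dots> \<in> v2.span (WW N)"
    by (intro v2.span_sum v2.span_scale v2.span_base) (auto simp: WW_def)
  finally have 1: "(G, 0) \<in> v2.span (WW N)" .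
  have "(0, H) = (\<Sum>x\<in>{..N}\<times>{..N}. scale2 (cc H (fst x) (snd x)) (0, mm (fst x) (snd x)))"
    using expand[OF assms(2)] by (simp add: scale2_def sum_prod)
  also have "\<dots> \<in> v2.span (WW N)"
    by (intro v2.span_sum v2.span_scale v2.span_base) (auto simp: WW_def)
  finally have 2: "(0, H) \<in> v2.span (WW N)" .
  have "(G, H) = (G, 0) + (0, H)" by simp
  then show ?thesis using v2.span_add[OF 1 2] by simp
qed

lemma kerG_span: "kerG (f::'a::field poly poly) n \<subseteq> v2.span (WW (n - 1))"
  unfolding kerG_def using span_WW by blast
lemma kerR_span: "kerR (f::'a::field poly poly) n \<subseteq> v2.span (WW (n - 1))"
  unfolding kerR_def using span_WW by blast

lemma dim_insert_fin:
  fixes V W :: "('a::field poly poly \<times> 'a poly poly) set"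
  assumes VW: "V \<subseteq> v2.span W" and fW: "finite W" and x: "x \<notin> v2.span V"
  shows "v2.dim (insert x V) = v2.dim V + 1"
proof -
  obtain B where B: "B \<subseteq> v2.span V" "v2.independent B" "v2.span V \<subseteq> v2.span B" "card B = v2.dim (v2.span V)"
    using v2.basis_exists [of "v2.span V"] by blast
  have "v2.span V \<subseteq> v2.span W" using v2.span_mono[OF VW] by (simp add: v2.span_span)
  then have fB: "finite B" using v2.independent_span_bound[OF fW B(2)] B(1) by blast
  have "v2.dim (v2.span (insert x V)) = Suc (v2.dim V)"
  proof (rule v2.dim_unique)
    show "insert x B \<subseteq> v2.span (insert x V)"
      by (meson B(1) insertI1 insert_subset order_trans v2.span_base v2.span_mono subset_insertI)
    show "v2.span (insert x V) \<subseteq> v2.span (insert x B)"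
      by (metis \<open>B \<subseteq> v2.span V\<close> \<open>v2.span V \<subseteq> v2.span B\<close> v2.span_breakdown_eq v2.span_subspace subsetI v2.subspace_span)
    show "v2.independent (insert x B)"
      by (metis B(1-3) v2.independent_insert v2.span_subspace v2.subspace_span x)
    have "x \<notin> B" using B(1) x v2.span_base by blast
    then show "card (insert x B) = Suc (v2.dim V)"
      using B fB by simp
  qed
  then show ?thesis by simp
qed

lemma total_degree_facts:
  fixes f :: "'a::field poly poly"
  assumes "f \<noteq> 0"
  shows "tdeg_le f (total_degree f) \<and> hp (total_degree f) f \<noteq> 0"
proof -
  define M where "M = {i + degree (coeff f i) | i. coeff f i \<noteq> 0}"
  have td: "total_degree f = Max M" using assms by (simp add: total_degree_def M_def)
  have "M \<subseteq> (\<lambda>i. i + degree (coeff f i)) ` {..degree f}"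
    unfolding M_def using le_degree by fastforce
  then have fM: "finite M" by (rule finite_subset) simp
  have "coeff f (degree f) \<noteq> 0" using assms by simp
  then have neM: "M \<noteq> {}" unfolding M_def by blast
  have t: "tdeg_le f (total_degree f)"
    unfolding tdeg_le_def td using fM by (auto intro: Max_ge simp: M_def)
  have "Max M \<in> M" using fM neM by (rule Max_in)
  then obtain i where i: "coeff f i \<noteq> 0" "i + degree (coeff f i) = total_degree f"
    unfolding td M_def by auto
  have c: "cc f (degree (coeff f i)) i \<noteq> 0" using i(1) by (simp add: cc_def)
  have e: "degree (coeff f i) + i = total_degree f" using i(2) by simp
  have "cc (hp (total_degree f) f) (degree (coeff f i)) i = cc f (degree (coeff f i)) i"
    by (simp only: cc_hp e if_True refl simp_thms)
  then have "hp (total_degree f) f \<noteq> 0" using c by (metis cc_0)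
  with t show ?thesis by blast
qed


lemma partA_set:
  fixes f :: "'a::field_char_0 poly poly"
  assumes tf: "tdeg_le f d" and F0: "hp d f \<noteq> 0" and d1: "1 \<le> d" and nu: "d < \<nu>"
  shows "kerR f \<nu> = kerG f (\<nu> - 1)"
proof
  show "kerR f \<nu> \<subseteq> kerG f (\<nu> - 1)"
  proof
    fix x assume "x \<in> kerR f \<nu>"
    then obtain G H where x: "x = (G, H)" and k: "tdeg_le G (\<nu> - 1)" "tdeg_le H (\<nu> - 1)"
      "tdeg_le (polyX * G + polyY * H) (\<nu> - 1)" "opGR f G H = 0"
      unfolding kerR_def by blast
    have "tdeg_le G (\<nu> - 1 - 1) \<and> tdeg_le H (\<nu> - 1 - 1)"
      by (rule partA[OF tf F0 _ d1 k]) (use nu in simp)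
    then show "x \<in> kerG f (\<nu> - 1)" using k x unfolding kerG_def by simp
  qed
next
  show "kerG f (\<nu> - 1) \<subseteq> kerR f \<nu>"
  proof
    fix x assume "x \<in> kerG f (\<nu> - 1)"
    then obtain G H where x: "x = (G, H)" and k: "tdeg_le G (\<nu> - 1 - 1)" "tdeg_le H (\<nu> - 1 - 1)"
      "opGR f G H = 0"
      unfolding kerG_def by blast
    have s: "Suc (\<nu> - 1 - 1) = \<nu> - 1" using nu d1 by simp
    have "tdeg_le (polyX * G + polyY * H) (\<nu> - 1)"
      using tdeg_add[OF tdeg_X[OF k(1)] tdeg_Y[OF k(2)]] unfolding s .
    moreover have "tdeg_le G (\<nu> - 1)" "tdeg_le H (\<nu> - 1)" using k by (auto intro: tdeg_mono)
    ultimately show "x \<in> kerR f \<nu>" using k x unfolding kerR_def by simp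
  qed
qed

lemma partB_dim:
  fixes f :: "'a::field_char_0 poly poly"
  assumes tf: "tdeg_le f d" and F0: "hp d f \<noteq> 0" and d1: "1 \<le> d"
  shows "v2.dim (kerG f d) = v2.dim (kerR f d) + 1"
proof -
  define w where "w = (dX f, dY f)"
  define F where "F = hp d f"
  have sd: "Suc (d - 1) = d" using d1 by simp
  have opw: "opGR f (dX f) (dY f) = 0" by (simp add: opGR_def dXdY algebra_simps)
  have wG: "w \<in> kerG f d" unfolding w_def kerG_def using tdeg_dX[OF tf] tdeg_dY[OF tf] opw by simp
  have hpw: "hp d (polyX * dX f + polyY * dY f) = of_nat d * F"
    using hp_X[of "d - 1" "dX f", unfolded sd] hp_Y[of "d - 1" "dY f", unfolded sd]
      hp_dX[OF tf] hp_dY[OF tf] euler[OF hom_hp[of d f]]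
    by (simp add: hp_add F_def)
  have ofd: "(of_nat d :: 'a poly poly) * F = smult [:of_nat d:] F" by (simp add: of_nat_poly)
  have wR: "w \<notin> kerR f d"
  proof
    assume "w \<in> kerR f d"
    then have "tdeg_le (polyX * dX f + polyY * dY f) (d - 1)" unfolding kerR_def w_def by simp
    then have "hp d (polyX * dX f + polyY * dY f) = 0" by (rule hp_tdeg) (use d1 in simp)
    then have "(of_nat d :: 'a poly poly) * F = 0" using hpw by simp
    then show False using d1 F0 by (simp add: F_def)
  qed
  have RG: "kerR f d \<subseteq> kerG f d" unfolding kerR_def kerG_def by auto
  have GR: "kerG f d \<subseteq> v2.span (insert w (kerR f d))"
  proof
    fix x assume "x \<in> kerG f d"
    then obtain G H where x: "x = (G, H)" and k: "tdeg_le G (d - 1)" "tdeg_le H (d - 1)" "opGR f G H = 0"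
      unfolding kerG_def by blast
    obtain c where c: "hp d (polyX * G + polyY * H) = smult [:c:] F"
      using partB[OF tf F0 d1 k] by (auto simp: F_def)
    define c' where "c' = c / of_nat d"
    define G' H' where "G' = G - smult [:c':] (dX f)" "H' = H - smult [:c':] (dY f)"
    have tG': "tdeg_le G' (d - 1)" unfolding G'_H'_def by (intro tdeg_diff k tdeg_smult tdeg_dX[OF tf])
    have tH': "tdeg_le H' (d - 1)" unfolding G'_H'_def by (intro tdeg_diff k tdeg_smult tdeg_dY[OF tf])
    have op': "opGR f G' H' = 0" unfolding G'_H'_def opGR_lin k opw by simp
    have P: "polyX * G' + polyY * H' = (polyX * G + polyY * H) - smult [:c':] (polyX * dX f + polyY * dY f)"
      unfolding G'_H'_def by (simp add: algebra_simps smult_add_right)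
    have tP: "tdeg_le (polyX * G' + polyY * H') d"
      using tdeg_add[OF tdeg_X[OF tG'] tdeg_Y[OF tH']] unfolding sd .
    have "hp d (polyX * G' + polyY * H') = smult [:c:] F - smult [:c':] (smult [:of_nat d:] F)"
      unfolding P hp_diff hp_smult c hpw ofd ..
    also have "\<dots> = 0" using d1 by (simp add: smult_const_mult c'_def)
    finally have "lt d (polyX * G' + polyY * H')" using hom_lt_tdeg[OF tP] by simp
    then have "tdeg_le (polyX * G' + polyY * H') (d - 1)" by (rule lt_tdeg)
    then have inR: "(G', H') \<in> kerR f d" using tG' tH' op' unfolding kerR_def by simp
    have "x = (G', H') + scale2 c' w" unfolding x G'_H'_def w_def scale2_def by simp
    also have "\<dots> \<in> v2.span (insert w (kerR f d))"
      by (intro v2.span_add v2.span_scale v2.span_base) (use inR in auto)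
    finally show "x \<in> v2.span (insert w (kerR f d))" .
  qed
  have "insert w (kerR f d) \<subseteq> kerG f d" using wG RG by auto
  then have "v2.span (insert w (kerR f d)) \<subseteq> kerG f d"
    using v2.span_minimal subspace_kerG by blast
  with GR have "v2.span (kerG f d) = v2.span (insert w (kerR f d))"
    by (metis subspace_kerG v2.span_eq_iff subset_antisym v2.span_span v2.span_mono)
  then have "v2.dim (kerG f d) = v2.dim (insert w (kerR f d))" by (rule v2.span_eq_dim)
  also have "\<dots> = v2.dim (kerR f d) + 1"
    using dim_insert_fin[OF kerR_span finite_WW] wR subspace_kerR v2.span_eq_iff by metis
  finally show ?thesis .
qed

theorem proposition1p5:
  fixes f :: "'a::{alg_closed_field, field_char_0} poly poly" and d :: nat
  assumes "f \<noteq> 0" and "total_degree f = d" and "d \<ge> 1"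
  shows "int (kdim (kerR f d)) = int (kdim (kerG f d)) - 1
    \<and> (\<forall>\<nu>::nat. \<nu> > d \<longrightarrow> kdim (kerR f \<nu>) = kdim (kerG f (\<nu> - 1)))"
proof -
  have tf: "tdeg_le f d" and F0: "hp d f \<noteq> 0" using total_degree_facts[OF assms(1)] assms(2) by auto
  have "v2.dim (kerG f d) = v2.dim (kerR f d) + 1" by (rule partB_dim[OF tf F0 assms(3)])
  moreover have "\<forall>\<nu>::nat. \<nu> > d \<longrightarrow> kerR f \<nu> = kerG f (\<nu> - 1)"
    using partA_set[OF tf F0 assms(3)] by blast
  ultimately show ?thesis unfolding kdim_def by simp
qed

end
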